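(* Let $k$ be a field of characteristic different from $2$ containing an element $i$ with $i^2=-1$, and let $k(u,v)$ be the rational function field in two variables. Then in the Brauer group $\mathrm{Br}(k(u,v))$ one has the equality of quaternion classes $$\big(uv(u^2-1)(v^2-1),\; u(v^2-1)(v^2-u^2)\big) = (u,v).$$ Equivalently, the conics in $\mathbf{P}^2_{k(u,v)}$ given in homogeneous coordinates $S,T,R$ by $$v(v^2-1)S^2 - u(u^2-1)T^2 + uv(u^2-v^2)R^2 = 0 \quad\text{and}\quad S^2 - uT^2 - vR^2 = 0$$ are isomorphic over $k(u,v)$.
   Context: For a field $F$ of characteristic $\neq 2$ and $a,b\in F^\times$, $(a,b)\in\mathrm{Br}(F)$ denotes the class of the quaternion algebra with generators $x,y$ and relations $x^2=a$, $y^2=b$, $xy=-yx$. *)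

theory Defs
  imports "HOL-Computational_Algebra.Polynomial" "HOL-Computational_Algebra.Fraction_Field"
begin

text \<open>The quaternion algebra (a,b) over a field F, realised concretely on F^4 with
  basis 1, x, y, xy and relations x^2 = a, y^2 = b, xy = -yx.\<close>

type_synonym 'a quat = "'a \<times> 'a \<times> 'a \<times> 'a"

definition quat_add :: "'a::field quat \<Rightarrow> 'a quat \<Rightarrow> 'a quat" where
  "quat_add p q = (case p of (p0,p1,p2,p3) \<Rightarrow> case q of (q0,q1,q2,q3) \<Rightarrow>
     (p0+q0, p1+q1, p2+q2, p3+q3))"

definition quat_scale :: "'a::field \<Rightarrow> 'a quat \<Rightarrow> 'a quat" where
  "quat_scale s p = (case p of (p0,p1,p2,p3) \<Rightarrow> (s*p0, s*p1, s*p2, s*p3))"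

definition quat_mult :: "'a::field \<Rightarrow> 'a \<Rightarrow> 'a quat \<Rightarrow> 'a quat \<Rightarrow> 'a quat" where
  "quat_mult a b p q = (case p of (p0,p1,p2,p3) \<Rightarrow> case q of (q0,q1,q2,q3) \<Rightarrow>
     (p0*q0 + a*p1*q1 + b*p2*q2 - a*b*p3*q3,
      p0*q1 + p1*q0 - b*p2*q3 + b*p3*q2,
      p0*q2 + p2*q0 + a*p1*q3 - a*p3*q1,
      p0*q3 + p3*q0 + p1*q2 - p2*q1))"

text \<open>Two quaternion algebras
  (central simple of the same degree 2) have the same Brauer class iff they are
  isomorphic as F-algebras; we state it as existence of an F-algebra isomorphism.\<close>

definition quat_brauer_eq :: "'a::field \<Rightarrow> 'a \<Rightarrow> 'a \<Rightarrow> 'a \<Rightarrow> bool" where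
  "quat_brauer_eq a b c d \<longleftrightarrow>
     (\<exists>f :: 'a quat \<Rightarrow> 'a quat. bij f \<and>
        (\<forall>p q. f (quat_add p q) = quat_add (f p) (f q)) \<and>
        (\<forall>s p. f (quat_scale s p) = quat_scale s (f p)) \<and>
        (\<forall>p q. f (quat_mult a b p q) = quat_mult c d (f p) (f q)) \<and>
        f (1,0,0,0) = (1,0,0,0))"

text \<open>The rational function field k(u,v) as the fraction field of k[u][v].\<close>

definition var_u :: "'k::field poly poly fract" where
  "var_u = Fract [:[:0, 1:]:] 1"

definition var_v :: "'k::field poly poly fract" where
  "var_v = Fract [:0, 1:] 1"

end

theory Submission
  imports Defs
begin
lemma gen_iso:
  fixes c d x1 x2 x3 y1 y2 y3 a b :: "'a::field"
  assumes orth: "c*x1*y1 + d*x2*y2 - c*d*x3*y3 = 0"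
  and ha: "a = c*x1*x1 + d*x2*x2 - c*d*x3*x3"
  and hb: "b = c*y1*y1 + d*y2*y2 - c*d*y3*y3"
  and a0: "a \<noteq> 0" and b0: "b \<noteq> 0"
  shows "quat_brauer_eq a b c d"
proof -
  define z1 where "z1 = - d*x2*y3 + d*x3*y2"
  define z2 where "z2 = c*x1*y3 - c*x3*y1"
  define z3 where "z3 = x1*y2 - x2*y1"
  define f where "f = (\<lambda>(p0::'a,p1::'a,p2::'a,p3::'a). (p0, p1*x1 + p2*y1 + p3*z1, p1*x2 + p2*y2 + p3*z2, p1*x3 + p2*y3 + p3*z3))"
  define bf where "bf = (\<lambda>w1 w2 w3 v1 v2 v3. c*w1*v1+d*w2*v2-c*d*w3*v3::'a)"
  define g where "g = (\<lambda>(w0::'a,w1::'a,w2::'a,w3::'a). (w0, bf w1 w2 w3 x1 x2 x3 / a, bf w1 w2 w3 y1 y2 y3 / b, bf w1 w2 w3 z1 z2 z3 / (-(a*b))))"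
  have cid: "\<And>w1 w2 w3. b*(bf w1 w2 w3 x1 x2 x3)*x1 + a*(bf w1 w2 w3 y1 y2 y3)*y1 - (bf w1 w2 w3 z1 z2 z3)*z1 = a*b*w1"
    "\<And>w1 w2 w3. b*(bf w1 w2 w3 x1 x2 x3)*x2 + a*(bf w1 w2 w3 y1 y2 y3)*y2 - (bf w1 w2 w3 z1 z2 z3)*z2 = a*b*w2"
    "\<And>w1 w2 w3. b*(bf w1 w2 w3 x1 x2 x3)*x3 + a*(bf w1 w2 w3 y1 y2 y3)*y3 - (bf w1 w2 w3 z1 z2 z3)*z3 = a*b*w3"
    "bf z1 z2 z3 x1 x2 x3 = 0"  "bf z1 z2 z3 y1 y2 y3 = 0"
    "bf z1 z2 z3 z1 z2 z3 = -(a*b)"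
    unfolding bf_def ha hb z1_def z2_def z3_def using orth by algebra+
  have cid2: "bf x1 x2 x3 x1 x2 x3 = a" "bf y1 y2 y3 y1 y2 y3 = b" "bf x1 x2 x3 y1 y2 y3 = 0" "bf y1 y2 y3 x1 x2 x3 = 0"
    unfolding bf_def ha hb using orth by (simp_all add: algebra_simps)
  have bfl: "\<And>w1 w2 w3 w1' w2' w3' s t v1 v2 v3. bf (s*w1+t*w1') (s*w2+t*w2') (s*w3+t*w3') v1 v2 v3 = s * bf w1 w2 w3 v1 v2 v3 + t * bf w1' w2' w3' v1 v2 v3"
    unfolding bf_def by (simp add: algebra_simps)
  have bfsym: "\<And>w1 w2 w3 v1 v2 v3. bf w1 w2 w3 v1 v2 v3 = bf v1 v2 v3 w1 w2 w3"
    unfolding bf_def by (simp add: algebra_simps)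
  have cid3: "bf x1 x2 x3 z1 z2 z3 = 0" "bf y1 y2 y3 z1 z2 z3 = 0"
    using cid(4,5) bfsym by metis+
  have gf: "g (f p) = p" for p
  proof -
    obtain p0 p1 p2 p3 where p: "p = (p0,p1,p2,p3)" by (cases p) auto
    have e: "\<And>v1 v2 v3. bf (p1*x1 + p2*y1 + p3*z1) (p1*x2 + p2*y2 + p3*z2) (p1*x3 + p2*y3 + p3*z3) v1 v2 v3
       = p1 * bf x1 x2 x3 v1 v2 v3 + p2 * bf y1 y2 y3 v1 v2 v3 + p3 * bf z1 z2 z3 v1 v2 v3"
      unfolding bf_def by (simp add: algebra_simps)
    show ?thesis unfolding p f_def g_def using a0 b0
      by (simp add: e cid cid2 cid3)
  qed
  have fg: "f (g w) = w" for w
  proof -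
    obtain w0 w1 w2 w3 where w: "w = (w0,w1,w2,w3)" by (cases w) auto
    have h: "\<And>xx yy zz. (bf w1 w2 w3 x1 x2 x3 / a)*xx + (bf w1 w2 w3 y1 y2 y3 / b)*yy + (bf w1 w2 w3 z1 z2 z3 / (-(a*b)))*zz
       = (b*(bf w1 w2 w3 x1 x2 x3)*xx + a*(bf w1 w2 w3 y1 y2 y3)*yy - (bf w1 w2 w3 z1 z2 z3)*zz) / (a*b)"
      using a0 b0 by (simp add: field_simps)
    show ?thesis unfolding w f_def g_def by (simp only: prod.case h cid) (use a0 b0 in simp)
  qed
  have mult: "f (quat_mult a b p q) = quat_mult c d (f p) (f q)" for p q
  proof -
    obtain p0 p1 p2 p3 where p: "p = (p0,p1,p2,p3)" by (cases p) auto
    obtain q0 q1 q2 q3 where q: "q = (q0,q1,q2,q3)" by (cases q) auto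
    show ?thesis
      unfolding p q f_def quat_mult_def ha hb z1_def z2_def z3_def
      apply (simp only: prod.case prod_eq_iff fst_conv snd_conv)
      apply (intro conjI)
      using orth by algebra+
  qed
  have "bij f" by (rule o_bij[of g]) (auto simp: fun_eq_iff gf fg)
  moreover have "\<forall>p q. f (quat_add p q) = quat_add (f p) (f q)"
    by (auto simp: f_def quat_add_def algebra_simps split: prod.splits)
  moreover have "\<forall>s p. f (quat_scale s p) = quat_scale s (f p)"
    by (auto simp: f_def quat_scale_def algebra_simps split: prod.splits)
  moreover have "f (1,0,0,0) = (1,0,0,0)" by (simp add: f_def)
  ultimately show ?thesis unfolding quat_brauer_eq_def using mult by blast
qed

lemma conc_ids:
  fixes u v j :: "'a::field"
  assumes j: "j*j = -1"
  shows "u*((1-j)*(1+u)*v)*(j*v - v*v - u + j*u*v) + v*(u*(1+j)*(1+v))*(-(1+j)*u*(1+v)) - u*v*(v*(1+j*u) - j*(1-j*u))*((1-j)*(u-v)) = 0"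
    "u * v * (u^2 - 1) * (v^2 - 1) = u*((1-j)*(1+u)*v)*((1-j)*(1+u)*v) + v*(u*(1+j)*(1+v))*(u*(1+j)*(1+v)) - u*v*(v*(1+j*u) - j*(1-j*u))*(v*(1+j*u) - j*(1-j*u))"
    "u * (v^2 - 1) * (v^2 - u^2) = u*(j*v - v*v - u + j*u*v)*(j*v - v*v - u + j*u*v) + v*(-(1+j)*u*(1+v))*(-(1+j)*u*(1+v)) - u*v*((1-j)*(u-v))*((1-j)*(u-v))"
  using j unfolding power2_eq_square by algebra+

lemma j_sq: fixes i::"'k::field" assumes "i*i = -1"
  shows "(Fract [:[:i:]:] 1 :: 'k poly poly fract) * Fract [:[:i:]:] 1 = -1"
proof -
  have m1: "[:[:-1:]:] = (-1 :: 'k poly poly)"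
    by (simp add: one_pCons)
  have "[:[:i:]:] * [:[:i:]:] = (-1 :: 'k poly poly)"
    using assms m1 by (simp add: mult_ac)
  then show ?thesis by (simp add: One_fract_def)
qed

lemma Fr1: "Fract (a::'a::idom) 1 = 0 \<longleftrightarrow> a = 0"
  by (simp add: Zero_fract_def eq_fract)
lemma Fr_mult: "Fract (a::'a::idom) 1 * Fract b 1 = Fract (a*b) 1" by simp
lemma Fr_diff: "Fract (a::'a::idom) 1 - Fract b 1 = Fract (a-b) 1" by simp

lemma u_ne: "(var_u::'k::field poly poly fract) \<noteq> 0"
  unfolding var_u_def Fr1 by simp
lemma v_ne: "(var_v::'k::field poly poly fract) \<noteq> 0"
  unfolding var_v_def Fr1 by simp

lemma p_ne: "(var_u::'k::field poly poly fract)^2 - 1 \<noteq> 0"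
proof
  assume "(var_u::'k poly poly fract)^2 - 1 = 0"
  hence "Fract ([:[:0,1:]:]*[:[:0,1:]:] - 1) 1 = (0::'k poly poly fract)"
    unfolding var_u_def power2_eq_square One_fract_def Fr_mult Fr_diff .
  hence "([:[:0,1:]:]*[:[:0,1:]:] - 1 :: 'k poly poly) = 0" unfolding Fr1 .
  hence "poly (poly ([:[:0,1:]:]*[:[:0,1:]:] - 1 :: 'k poly poly) 0) 0 = 0" by simp
  thus False by simp
qed

lemma q_ne: "(var_v::'k::field poly poly fract)^2 - 1 \<noteq> 0"
proof
  assume "(var_v::'k poly poly fract)^2 - 1 = 0"
  hence "Fract ([:0,1:]*[:0,1:] - 1) 1 = (0::'k poly poly fract)"
    unfolding var_v_def power2_eq_square One_fract_def Fr_mult Fr_diff .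
  hence "([:0,1:]*[:0,1:] - 1 :: 'k poly poly) = 0" unfolding Fr1 .
  hence "poly (poly ([:0,1:]*[:0,1:] - 1 :: 'k poly poly) 0) 0 = 0" by simp
  thus False by simp
qed

lemma d_ne: "(var_v::'k::field poly poly fract)^2 - var_u^2 \<noteq> 0"
proof
  assume "(var_v::'k poly poly fract)^2 - var_u^2 = 0"
  hence "Fract ([:0,1:]*[:0,1:] - [:[:0,1:]:]*[:[:0,1:]:]) 1 = (0::'k poly poly fract)"
    unfolding var_v_def var_u_def power2_eq_square Fr_mult Fr_diff .
  hence "([:0,1:]*[:0,1:] - [:[:0,1:]:]*[:[:0,1:]:] :: 'k poly poly) = 0" unfolding Fr1 .
  hence "poly (poly ([:0,1:]*[:0,1:] - [:[:0,1:]:]*[:[:0,1:]:] :: 'k poly poly) 0) 1 = 0" by simp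
  thus False by simp
qed


theorem mainTheorem2:
  assumes "(2::'k::field) \<noteq> 0"
    and "\<exists>i::'k. i * i = -1"
  shows "quat_brauer_eq
     ((var_u::'k poly poly fract) * var_v * (var_u^2 - 1) * (var_v^2 - 1))
     (var_u * (var_v^2 - 1) * (var_v^2 - var_u^2))
     var_u var_v"
proof -
  obtain i0 :: 'k where i0: "i0 * i0 = -1" using assms(2) by blast
  define j :: "'k poly poly fract" where "j = Fract [:[:i0:]:] 1"
  have j: "j * j = -1" unfolding j_def using j_sq[OF i0] .
  note ids = conc_ids[OF j, of var_u var_v]
  have A0: "(var_u::'k poly poly fract) * var_v * (var_u^2 - 1) * (var_v^2 - 1) \<noteq> 0"
    using u_ne v_ne p_ne q_ne by simp
  have B0: "(var_u::'k poly poly fract) * (var_v^2 - 1) * (var_v^2 - var_u^2) \<noteq> 0"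
    using u_ne q_ne d_ne by simp
  show ?thesis
    by (rule gen_iso[OF ids(1) ids(2) ids(3) A0 B0])
qed

end
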